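(* Suppose Assumptions (A1)–(A3) hold and $a<1/U_L$. Let $\Gamma\ge0$, $\epsilon\in(0,1]$, and $\zeta_1(\epsilon):=\ln\frac{3(\sigma_L+\mathcal C_\mu)peR}{\epsilon}$. Assume: (i) $\hat\beta$, with $\|\hat\beta\|_\infty\le R$, satisfies S$^3$ONC$(\mathbf Z_1^n)$ almost surely; (ii) $\mathcal L_{n,\lambda}(\hat\beta,\mathbf Z_1^n)\le\mathcal L_{n,\lambda}(\beta^*_{\hat\varepsilon},\mathbf Z_1^n)+\Gamma$ with probability one; (iii) $\tilde p_u>s$ is an integer such that, for all integers $\tilde p$ with $\tilde p_u\le\tilde p\le p$, $$(\tilde p-s)P_\lambda(a\lambda)>\frac{4\sigma}{nc}\zeta_1(\epsilon)\tilde p+\frac{2\sigma}{\sqrt n}\sqrt{\frac{2\tilde p}{c}\zeta_1(\epsilon)}+\Gamma+2\epsilon+\hat\varepsilon.$$ Then, for some constant $\tilde c>0$, with probability at least $1-2(p+1)e^{-\tilde cn}-6\exp(-\tilde p_u\zeta_1(\epsilon))$, $$\mathbb L(\hat\beta)-\mathbb L(\beta^* )\le sP_\lambda(a\lambda)+\frac{2\sigma}{\sqrt n}\sqrt{\frac{2\tilde p_u}{c}\zeta_1(\epsilon)}+\frac{4\sigma}{n}\cdot\frac{\tilde p_u}{c}\zeta_1(\epsilon)+2\epsilon+\hat\varepsilon+\Gamma.$$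
   Context: Standing setup. Let $Z_1,\dots,Z_n$ be i.i.d. random samples with support $\mathcal W\subseteq\mathbb R^q$, and write $\mathbf Z_1^n=(Z_1,\dots,Z_n)$. Let $L:\mathbb R^p\times\mathcal W\to\mathbb R$ ($p>2$) be measurable and deterministic. Define $\mathcal L_n(\beta,\mathbf Z_1^n)=\frac1n\sum_iL(\beta,Z_i)$ and $\mathbb L(\beta)=\mathbb E[\mathcal L_n(\beta,\mathbf Z_1^n)]$. Let $\beta^*\in\arg\min_\beta\mathbb L(\beta)$ with $\|\beta^*\|_\infty\le R$, $R\ge1$. $L(\cdot,z)$ is continuously differentiable for a.e. $z$ with coordinatewise Lipschitz partial derivatives of constant $U_L\ge1$: $$|\partial_{\beta_j}\mathcal L_n(\tilde\beta+\delta e_j,z)-\partial_{\beta_j}\mathcal L_n(\tilde\beta,z)|\le U_L|\delta|.$$ Penalty. $P_\lambda(\theta)=\int_0^\theta\frac{[a\lambda-t]_+}{a}dt$ (so $P_\lambda(a\lambda)=a\lambda^2/2$), and $\mathcal L_{n,\lambda}(\beta,\mathbf Z_1^n)=\mathcal L_n(\beta,\mathbf Z_1^n)+\sum_jP_\lambda(|\beta_j|)$. $\|\cdot\|$ is the Euclidean norm and $\|\cdot\|_0$ counts nonzeros. (A1) (A-sparsity). There is $\beta^*_{\hat\varepsilon}$ with $\|\beta^*_{\hat\varepsilon}\|_\infty\le R$, $s:=\|\beta^*_{\hat\varepsilon}\|_0\ge1$ and $\mathbb L(\beta^*_{\hat\varepsilon})-\mathbb L(\beta^* )\le\hat\varepsilon$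 ($\hat\varepsilon\ge0$). (A2). For every $\beta$, the variables $L(\beta,Z_i)-\mathbb EL(\beta,Z_i)$ are independent, sub-exponential, with $\psi_1$-norm $\le\sigma$ ($\sigma\ge1$). $c\in(0,0.5]$ is the absolute constant with $$\mathbb P(|\sum_ia_i\{L(\beta,Z_i)-\mathbb EL(\beta,Z_i)\}|>\sigma(\|\mathbf a\|\sqrt t+\|\mathbf a\|_\infty t))\le2e^{-ct}\quad\text{for all } t\ge0,\ \mathbf a.$$ (A3). There is a measurable deterministic $\mathcal C:\mathcal W\to\mathbb R_+$ with $\|\mathcal C(Z_i)-\mathbb E\mathcal C(Z_i)\|_{\psi_1}\le\sigma_L$ ($\sigma_L\ge1$), $\mathbb E|\mathcal C(Z_i)|\le\mathcal C_\mu$ ($\mathcal C_\mu\ge1$), and $|L(\beta_1,z)-L(\beta_2,z)|\le\mathcal C(z)\|\beta_1-\beta_2\|$. S$^3$ONC$(\mathbf Z_1^n)$. It holds at $\hat\beta$ if both of the following hold. (a) There exist $g_j$, with $g_j=P'_\lambda(|\hat\beta_j|)\mathrm{sign}(\hat\beta_j)$ if $\hat\beta_j\ne0$ and $g_j\in[-\lambda,\lambda]$ if $\hat\beta_j=0$, with $\partial_{\beta_j}\mathcal L_n(\hat\beta,\mathbf Z_1^n)+g_j=0$ for all $j$. (b) For every $j$ with $|\hat\beta_j|\in(0,a\lambda)$, $U_L+P''_\lambda(|\hat\beta_j|)\ge0$. *)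

theory Defs
  imports "HOL-Probability.Probability"
begin

text \<open>Empirical loss  L_n(beta, z_1..z_n) = (1/n) sum_{i<n} L(beta, z_i);
  the sample Z_1..Z_n is represented by the values zs 0, ..., zs (n-1).\<close>
definition emp_loss :: "(real^'p \<Rightarrow> 'w \<Rightarrow> real) \<Rightarrow> nat \<Rightarrow> real^'p \<Rightarrow> (nat \<Rightarrow> 'w) \<Rightarrow> real" where
  "emp_loss L n beta zs = (\<Sum>i<n. L beta (zs i)) / real n"

definition pop_loss :: "'o measure \<Rightarrow> (real^'p \<Rightarrow> 'w \<Rightarrow> real) \<Rightarrow> (nat \<Rightarrow> 'o \<Rightarrow> 'w) \<Rightarrow> nat \<Rightarrow> real^'p \<Rightarrow> real" where
  "pop_loss M L Z n beta = integral\<^sup>L M (\<lambda>\<omega>. emp_loss L n beta (\<lambda>i. Z i \<omega>))"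

definition penalty :: "real \<Rightarrow> real \<Rightarrow> real \<Rightarrow> real" where
  "penalty lam a \<theta> = integral {0..\<theta>} (\<lambda>t. max (a * lam - t) 0 / a)"

definition pen_loss :: "(real^'p \<Rightarrow> 'w \<Rightarrow> real) \<Rightarrow> real \<Rightarrow> real \<Rightarrow> nat \<Rightarrow> real^'p \<Rightarrow> (nat \<Rightarrow> 'w) \<Rightarrow> real" where
  "pen_loss L lam a n beta zs = emp_loss L n beta zs + (\<Sum>j\<in>UNIV. penalty lam a \<bar>beta $ j\<bar>)"

definition partial :: "(real^'p \<Rightarrow> real) \<Rightarrow> real^'p \<Rightarrow> 'p \<Rightarrow> real" where
  "partial f beta j = deriv (\<lambda>t. f (beta + t *\<^sub>R axis j 1)) 0"

definition S3ONC :: "(real^'p \<Rightarrow> 'w \<Rightarrow> real) \<Rightarrow> real \<Rightarrow> real \<Rightarrow> real \<Rightarrow> nat \<Rightarrow> (nat \<Rightarrow> 'w) \<Rightarrow> real^'p \<Rightarrow> bool" where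
  "S3ONC L U_L lam a n zs bh \<longleftrightarrow>
     (\<exists>g :: 'p \<Rightarrow> real.
        (\<forall>j. (if bh $ j \<noteq> 0 then g j = deriv (penalty lam a) \<bar>bh $ j\<bar> * sgn (bh $ j)
                else g j \<in> {-lam..lam})
             \<and> partial (\<lambda>b. emp_loss L n b zs) bh j + g j = 0))
   \<and> (\<forall>j. \<bar>bh $ j\<bar> \<in> {0<..<a * lam} \<longrightarrow> U_L + deriv (deriv (penalty lam a)) \<bar>bh $ j\<bar> \<ge> 0)"

text \<open>Sub-exponential (Orlicz psi_1) norm: inf{t > 0. E exp(|X|/t) <= 2}, with inf {} = infinity.\<close>
definition psi1_norm :: "'o measure \<Rightarrow> ('o \<Rightarrow> real) \<Rightarrow> ereal" where
  "psi1_norm M X = Inf (ereal ` {t. t > 0 \<and> (\<integral>\<^sup>+ \<omega>. ennreal (exp (\<bar>X \<omega>\<bar> / t)) \<partial>M) \<le> 2})"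

definition zeta1 :: "real \<Rightarrow> real \<Rightarrow> nat \<Rightarrow> real \<Rightarrow> real \<Rightarrow> real" where
  "zeta1 \<sigma>L C\<mu> p R \<epsilon> = ln (3 * (\<sigma>L + C\<mu>) * real p * exp 1 * R / \<epsilon>)"

end

theory Submission
  imports Defs
begin


lemma pen_closed1:
  assumes a: "a > 0" and th: "0 \<le> \<theta>" "\<theta> \<le> a * lam"
  shows "penalty lam a \<theta> = lam * \<theta> - \<theta>^2 / (2*a)"
proof -
  have "integral {0..\<theta>} (\<lambda>t. max (a * lam - t) 0 / a) = integral {0..\<theta>} (\<lambda>t. lam - t / a)"
    using th a by (intro integral_cong) (auto simp: field_simps max_def)
  also have "((\<lambda>t. lam - t / a) has_integral ((lam * \<theta> - \<theta>^2 / (2*a)) - (lam * 0 - 0^2/(2*a)))) {0..\<theta>}"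
  proof (rule fundamental_theorem_of_calculus)
    show "0 \<le> \<theta>" using th by simp
    fix x assume "x \<in> {0..\<theta>}"
    show "((\<lambda>t. lam * t - t^2 / (2*a)) has_vector_derivative lam - x / a) (at x within {0..\<theta>})"
      unfolding has_real_derivative_iff_has_vector_derivative[symmetric]
      using a by (auto intro!: derivative_eq_intros simp: field_simps)
  qed
  then have "integral {0..\<theta>} (\<lambda>t. lam - t / a) = lam * \<theta> - \<theta>^2 / (2*a)"
    by (simp add: integral_unique)
  finally show ?thesis by (simp add: penalty_def)
qed

lemma pen_ge:
  assumes a: "a > 0" and lam: "lam > 0" and th: "\<theta> \<ge> a * lam"
  shows "penalty lam a \<theta> = penalty lam a (a * lam)"
proof -
  let ?f = "\<lambda>t. max (a * lam - t) 0 / a"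
  have cont: "continuous_on UNIV ?f" by (intro continuous_intros) (use a in auto)
  have i1: "?f integrable_on {0..\<theta>}"
    by (auto intro!: integrable_continuous_real continuous_on_subset[OF cont])
  have "integral {0..\<theta>} ?f = integral {0..a*lam} ?f + integral {a*lam..\<theta>} ?f"
  proof -
    have z: "0 \<le> a*lam" using a lam by simp
    show ?thesis using Henstock_Kurzweil_Integration.integral_combine[OF z th i1] by simp
  qed
  moreover have "integral {a*lam..\<theta>} ?f = integral {a*lam..\<theta>} (\<lambda>t. 0::real)"
    by (intro integral_cong) (auto simp: max_def)
  ultimately show ?thesis by (simp add: penalty_def)
qed

lemma pen_bounds:
  assumes a: "a > 0" and lam: "lam > 0" and th: "0 \<le> \<theta>"
  shows "0 \<le> penalty lam a \<theta>" "penalty lam a \<theta> \<le> penalty lam a (a * lam)"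
proof -
  have P: "penalty lam a (a*lam) = lam * (a*lam) - (a*lam)^2/(2*a)"
    using pen_closed1[OF a, of "a*lam" lam] a lam by auto
  have "0 \<le> penalty lam a \<theta> \<and> penalty lam a \<theta> \<le> penalty lam a (a * lam)"
  proof (cases "\<theta> \<le> a * lam")
    case True
    have e: "penalty lam a \<theta> = lam * \<theta> - \<theta>^2 / (2*a)" using pen_closed1[OF a th True] .
    have "\<theta> * \<theta> \<le> \<theta> * (a * lam)" using True th by (simp add: mult_left_mono)
    then have "\<theta>^2 / (2*a) \<le> lam * \<theta> / 2" using True th a
      by (simp add: field_simps power2_eq_square)
    moreover have "lam * \<theta> - \<theta>^2 / (2*a) \<le> lam * (a*lam) - (a*lam)^2/(2*a)"
    proof -
      have "(a*lam - \<theta>)^2 / (2*a) \<ge> 0" using a by simp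
      moreover have "lam * (a*lam) - (a*lam)^2/(2*a) - (lam * \<theta> - \<theta>^2 / (2*a)) = (a*lam - \<theta>)^2 / (2*a)"
        using a by (simp add: field_simps power2_eq_square)
      ultimately show ?thesis by linarith
    qed
    moreover have "\<theta>^2 / (2*a) \<ge> 0" using a by simp
    ultimately show ?thesis using e P th lam by (auto simp: mult_nonneg_nonneg)
  next
    case False
    have "lam * (a*lam) - (a*lam)^2/(2*a) = a*(lam*lam)/2" using a by (simp add: field_simps power2_eq_square)
    moreover have "a*(lam*lam) > 0" using a lam by simp
    ultimately have "penalty lam a (a*lam) > 0" using P by linarith
    then show ?thesis using False pen_ge[OF a lam, of \<theta>] by simp
  qed
  then show "0 \<le> penalty lam a \<theta>" "penalty lam a \<theta> \<le> penalty lam a (a * lam)" by auto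
qed

lemma pen_zero: assumes "a > 0" "lam > 0" shows "penalty lam a 0 = 0"
  using pen_closed1[of a 0 lam] assms by simp

lemma pen_dd:
  assumes a: "a > 0" and x: "0 < x" "x < a * lam"
  shows "deriv (deriv (penalty lam a)) x = - 1 / a"
proof -
  have d1: "deriv (penalty lam a) y = lam - y / a" if y: "0 < y" "y < a * lam" for y
  proof -
    have "((\<lambda>t. lam * t - t^2 / (2*a)) has_field_derivative lam - y / a) (at y)"
      using a by (auto intro!: derivative_eq_intros simp: field_simps)
    then have "(penalty lam a has_field_derivative lam - y / a) (at y)"
      by (rule has_field_derivative_transform_within_open[where S="{0<..<a*lam}"])
         (use y a in \<open>auto intro!: pen_closed1[symmetric]\<close>)
    then show ?thesis by (rule DERIV_imp_deriv)
  qed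
  have "((\<lambda>y. lam - y / a) has_field_derivative - 1 / a) (at x)"
    using a by (auto intro!: derivative_eq_intros)
  then have "(deriv (penalty lam a) has_field_derivative - 1 / a) (at x)"
    by (rule has_field_derivative_transform_within_open[where S="{0<..<a*lam}"])
       (use x in \<open>auto intro!: d1[symmetric]\<close>)
  then show ?thesis by (rule DERIV_imp_deriv)
qed



lemma fact_sq_ge: "(fact q :: nat)^2 \<ge> q ^ q"
proof -
  have f: "fact q = (\<Prod>k\<in>{1..q}. k)" by (simp add: fact_prod)
  have r: "(\<Prod>k\<in>{1..q}. k) = (\<Prod>k\<in>{1..q}. q + 1 - k)"
  proof (rule prod.reindex_bij_witness[where i="\<lambda>k. q + 1 - k" and j="\<lambda>k. q + 1 - k"]) qed auto
  have "(fact q :: nat)^2 = (\<Prod>k\<in>{1..q}. k) * (\<Prod>k\<in>{1..q}. q + 1 - k)"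
    using f r by (simp add: power2_eq_square)
  also have "\<dots> = (\<Prod>k\<in>{1..q}. k * (q + 1 - k))" by (simp add: prod.distrib)
  also have "\<dots> \<ge> (\<Prod>k\<in>{1..q}. q)"
  proof (rule prod_mono)
    fix k assume k: "k \<in> {1..q}"
    obtain a b where ab: "k = a + 1" "q = k + b" using k
      by (metis add.commute atLeastAtMost_iff le_Suc_ex Suc_eq_plus1 le_add_diff_inverse2 Suc_le_D)
    have "k * (q + 1 - k) = (a+1)*(b+1)" using ab by simp
    also have "\<dots> \<ge> q" using ab by (simp add: algebra_simps)
    finally show "0 \<le> q \<and> q \<le> k * (q + 1 - k)" by simp
  qed
  finally show ?thesis by simp
qed

lemma fact_ge_sqrt_pow: "(fact q :: real) \<ge> sqrt (real q) ^ q"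
proof -
  have "real (q ^ q) \<le> real ((fact q :: nat)^2)" using fact_sq_ge[of q] by linarith
  then have "(sqrt (real q) ^ q)^2 \<le> (fact q :: real)^2"
    by (simp add: power_mult_distrib[symmetric] real_sqrt_pow2 power_mult[symmetric] mult.commute[of q 2] power_mult of_nat_fact)
  then show ?thesis
    by (rule power2_le_imp_le) simp
qed

lemma count_bound:
  fixes p q :: nat and X :: real
  assumes X: "X \<ge> 2"
  shows "real (p choose q) * (X * sqrt q + 3) ^ q \<le> (3 * exp 1 * real p * X) ^ q"
proof (cases "q = 0")
  case True then show ?thesis by simp
next
  case False
  then have q1: "sqrt q \<ge> 1" by simp
  have c1: "real (p choose q) * fact q \<le> real p ^ q"
    using binomial_fact_pow[of p q] by (metis of_nat_fact of_nat_le_iff of_nat_mult of_nat_power)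
  have fpos: "sqrt (real q) ^ q > 0" using q1 by simp
  have "real (p choose q) * sqrt (real q) ^ q \<le> real p ^ q"
    using c1 fact_ge_sqrt_pow[of q] by (meson mult_left_mono of_nat_0_le_iff order.trans)
  then have c2: "real (p choose q) \<le> real p ^ q / sqrt (real q) ^ q"
    using fpos by (simp add: field_simps)
  have "X * sqrt q + 3 \<le> (X + 3) * sqrt q" using q1 by (simp add: algebra_simps)
  then have "(X * sqrt q + 3) ^ q \<le> ((X + 3) * sqrt q) ^ q"
    using X by (intro power_mono) auto
  then have c3: "(X * sqrt q + 3) ^ q \<le> (X + 3)^q * sqrt q ^ q" by (simp add: power_mult_distrib)
  have "real (p choose q) * (X * sqrt q + 3) ^ q \<le> (real p ^ q / sqrt (real q) ^ q) * ((X + 3)^q * sqrt q ^ q)"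
    using c2 c3 X by (intro mult_mono) auto
  also have "\<dots> = (real p * (X + 3)) ^ q" using fpos by (auto simp: power_mult_distrib)
  also have "\<dots> \<le> (3 * exp 1 * real p * X) ^ q"
  proof (rule power_mono)
    have "exp 1 \<ge> (2::real)" using exp_ge_add_one_self[of 1] by simp
    then have "3 * exp 1 * X \<ge> 6 * X" using X by (simp add: mult_right_mono)
    then have "X + 3 \<le> 3 * exp 1 * X" using X by linarith
    then show "real p * (X + 3) \<le> 3 * exp 1 * real p * X"
      using mult_left_mono[of "X+3" "3 * exp 1 * X" "real p"] by (simp add: algebra_simps)
    show "0 \<le> real p * (X + 3)" using X by simp
  qed
  finally show ?thesis .
qed



definition net :: "nat \<Rightarrow> real \<Rightarrow> nat \<Rightarrow> (real^'p) set" where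
  "net q h K = (\<lambda>(S,f). \<chi> j. if j \<in> S then h * real_of_int (f j) else 0) `
      (SIGMA S:{S. card S = q}. PiE S (\<lambda>_. {- int K..int K}))"

lemma net_finite: "finite (net q h K :: (real^'p) set)"
  unfolding net_def by (intro finite_imageI finite_SigmaI finite_PiE) auto

lemma net_card: "real (card (net q h K :: (real^'p) set)) \<le> real (CARD('p) choose q) * (2 * real K + 1) ^ q"
proof -
  let ?A = "(SIGMA S:{S::'p set. card S = q}. PiE S (\<lambda>_. {- int K..int K}))"
  have fin: "finite ?A" by (intro finite_SigmaI finite_PiE) auto
  have "card (net q h K :: (real^'p) set) \<le> card ?A" unfolding net_def by (rule card_image_le[OF fin])
  also have "card ?A = (\<Sum>S\<in>{S::'p set. card S = q}. card (PiE S (\<lambda>_. {- int K..int K})))"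
    by (rule card_SigmaI) (auto intro!: finite_PiE)
  also have "\<dots> = (\<Sum>S\<in>{S::'p set. card S = q}. (2 * K + 1) ^ q)"
  proof (rule sum.cong)
    fix S :: "'p set" assume "S \<in> {S. card S = q}"
    then have "card S = q" by simp
    moreover have "card {- int K..int K} = 2 * K + 1" by simp
    ultimately show "card (PiE S (\<lambda>_. {- int K..int K})) = (2 * K + 1) ^ q"
      by (simp add: card_PiE)
  qed simp
  also have "\<dots> = card {S::'p set. card S = q} * (2 * K + 1) ^ q" by simp
  also have "card {S::'p set. card S = q} = CARD('p) choose q"
    using n_subsets[of "UNIV :: 'p set" q] by simp
  finally have "card (net q h K :: (real^'p) set) \<le> (CARD('p) choose q) * (2 * K + 1) ^ q" .
  then have "real (card (net q h K :: (real^'p) set)) \<le> real ((CARD('p) choose q) * (2 * K + 1) ^ q)"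
    by linarith
  then show ?thesis by (simp add: add.commute)
qed

lemma net_cover:
  fixes b :: "real^'p"
  assumes h: "h > 0" and K: "real K \<ge> R / h" and bR: "\<forall>j. \<bar>b $ j\<bar> \<le> R"
    and sp: "card {j. b $ j \<noteq> 0} \<le> q" and qp: "q \<le> CARD('p)"
  shows "\<exists>g \<in> net q h K. norm (b - g) \<le> sqrt (real q) * h / 2"
proof -
  let ?T = "{j. b $ j \<noteq> 0}"
  have "q - card ?T \<le> card (UNIV - ?T)" using qp sp by (simp add: card_Diff_subset)
  then obtain U where U: "U \<subseteq> UNIV - ?T" "card U = q - card ?T" "finite U"
    by (rule obtain_subset_with_card_n)
  define S where "S = ?T \<union> U"
  have cS: "card S = q" unfolding S_def using U sp
    by (subst card_Un_disjoint) auto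
  have supp: "\<And>j. j \<notin> S \<Longrightarrow> b $ j = 0" unfolding S_def by auto
  define f where "f = (\<lambda>j. if j \<in> S then round (b $ j / h) else undefined)"
  have fK: "f \<in> PiE S (\<lambda>_. {- int K..int K})"
  proof -
    have "round (b $ j / h) \<in> {- int K..int K}" for j
    proof -
      have "\<bar>b $ j / h\<bar> \<le> real K" using bR K h
        by (metis abs_divide abs_of_pos divide_right_mono less_imp_le order_trans)
      then have "b $ j / h \<le> real_of_int (int K)" "- real_of_int (int K) \<le> b $ j / h"
        unfolding abs_le_iff by linarith+
      then have "round (b $ j / h) \<le> round (real_of_int (int K))"
          "round (- real_of_int (int K)) \<le> round (b $ j / h)" using round_mono by blast+
      moreover have "round (real_of_int (int K)) = int K" "round (- real_of_int (int K)) = - int K"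
        by (simp_all only: round_of_int of_int_minus[symmetric])
      ultimately show ?thesis by simp
    qed
    then show ?thesis unfolding f_def by auto
  qed
  define g :: "real^'p" where "g = (\<chi> j. if j \<in> S then h * real_of_int (f j) else 0)"
  have gin: "g \<in> net q h K" unfolding net_def g_def using cS fK
    by (intro image_eqI[where x="(S,f)"]) auto
  have "norm (b - g) = sqrt (\<Sum>j\<in>UNIV. (b $ j - g $ j)^2)"
    by (simp add: norm_vec_def L2_set_def)
  also have "(\<Sum>j\<in>UNIV. (b $ j - g $ j)^2) \<le> (\<Sum>j\<in>UNIV. if j \<in> S then (h/2)^2 else 0)"
  proof (rule sum_mono)
    fix j
    show "(b $ j - g $ j)^2 \<le> (if j \<in> S then (h/2)^2 else 0)"
    proof (cases "j \<in> S")
      case True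
      have "\<bar>of_int (round (b $ j / h)) - b $ j / h\<bar> \<le> 1/2" by (rule of_int_round_abs_le)
      then have "\<bar>h * of_int (round (b $ j / h)) - b $ j\<bar> \<le> h / 2"
        using h by (simp add: abs_le_iff field_simps)
      then have "\<bar>b $ j - g $ j\<bar> \<le> h / 2" using True unfolding g_def f_def by (simp add: abs_minus_commute)
      then have "(b $ j - g $ j)^2 \<le> (h/2)^2"
        by (metis abs_ge_zero power2_abs power_mono)
      then show ?thesis using True by simp
    next
      case False then show ?thesis using supp unfolding g_def by simp
    qed
  qed
  also have "(\<Sum>j\<in>UNIV. if j \<in> S then (h/2)^2 else 0) = real q * (h/2)^2"
    using cS by (simp add: sum.If_cases)
  finally have "norm (b - g) \<le> sqrt (real q * (h/2)^2)" by simp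
  also have "\<dots> = sqrt (real q) * h / 2" using h by (simp add: real_sqrt_mult)
  finally show ?thesis using gin by blast
qed



lemma const_w:
  fixes n::nat assumes n: "n \<ge> 1"
  shows "sqrt (\<Sum>i<n. (1/real n)^2) * sqrt t + (MAX i\<in>{..<n}. \<bar>1/real n\<bar>) * t = sqrt (t/n) + t/n"
proof -
  have "(\<lambda>i. \<bar>1/real n\<bar>) ` {..<n} = {1/real n}" proof -
    have "0 \<in> {..<n}" using n by simp
    then have "{..<n} \<noteq> {}" by blast
    then show ?thesis by (simp add: image_constant_conv)
  qed
  then have m: "(MAX i\<in>{..<n}. \<bar>1/real n\<bar>) = 1 / real n" by simp
  have "(\<Sum>i<n. (1/real n)^2) = 1 / real n" using n by (simp add: power2_eq_square)
  then have "sqrt (\<Sum>i<n. (1/real n)^2) * sqrt t = sqrt (t / n)"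
    by (simp add: real_sqrt_divide real_sqrt_mult)
  then show ?thesis using m by simp
qed

lemma pop_loss_eq:
  assumes "\<And>i. integrable M (\<lambda>\<omega>. L b (Z i \<omega>))"
  shows "pop_loss M L Z n b = (\<Sum>i<n. integral\<^sup>L M (\<lambda>\<omega>. L b (Z i \<omega>))) / real n"
  unfolding pop_loss_def emp_loss_def
  by (simp add: Bochner_Integration.integral_sum[OF assms])

lemma emp_minus_pop:
  assumes "\<And>i. integrable M (\<lambda>\<omega>. L b (Z i \<omega>))"
  shows "emp_loss L n b (\<lambda>i. Z i \<omega>) - pop_loss M L Z n b
     = (\<Sum>i<n. 1 / real n * (L b (Z i \<omega>) - integral\<^sup>L M (\<lambda>\<omega>'. L b (Z i \<omega>'))))"
proof -
  have "pop_loss M L Z n b = (\<Sum>i<n. integral\<^sup>L M (\<lambda>\<omega>. L b (Z i \<omega>))) / real n"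
    by (rule pop_loss_eq) (rule assms)
  then show ?thesis unfolding emp_loss_def
  by (simp add: sum_distrib_left[symmetric] sum_subtractf diff_divide_distrib sum_divide_distrib[symmetric])
qed

lemma dev_L:
  assumes L_int: "\<And>b i. integrable M (\<lambda>\<omega>. L b (Z i \<omega>))"
    and L_bernstein: "\<And>b n (w :: nat \<Rightarrow> real) t. n \<ge> 1 \<Longrightarrow> t \<ge> 0 \<Longrightarrow>
        measure M {\<omega> \<in> space M.
           \<bar>\<Sum>i<n. w i * (L b (Z i \<omega>) - integral\<^sup>L M (\<lambda>\<omega>'. L b (Z i \<omega>')))\<bar>
             > \<sigma> * (sqrt (\<Sum>i<n. (w i)\<^sup>2) * sqrt t + (MAX i\<in>{..<n}. \<bar>w i\<bar>) * t)}
        \<le> 2 * exp (- c * t)"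
    and n: "n \<ge> 1" and t: "t \<ge> 0"
  shows "measure M {\<omega> \<in> space M. \<bar>emp_loss L n b (\<lambda>i. Z i \<omega>) - pop_loss M L Z n b\<bar>
            > \<sigma> * (sqrt (t / n) + t / n)} \<le> 2 * exp (- c * t)"
  using L_bernstein[where b=b and w="\<lambda>_. 1 / real n", OF n t]
  unfolding const_w[OF n] emp_minus_pop[of M L b Z, OF L_int] .

lemma dev_L_sets:
  assumes L_int: "\<And>b i. integrable M (\<lambda>\<omega>. L b (Z i \<omega>))"
  shows "{\<omega> \<in> space M. \<bar>emp_loss L n b (\<lambda>i. Z i \<omega>) - pop_loss M L Z n b\<bar> > x} \<in> sets M"
proof -
  have "(\<lambda>\<omega>. L b (Z i \<omega>)) \<in> borel_measurable M" for i using L_int by auto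
  then have "(\<lambda>\<omega>. emp_loss L n b (\<lambda>i. Z i \<omega>)) \<in> borel_measurable M"
    unfolding emp_loss_def by measurable
  then show ?thesis by measurable
qed

lemma dev_C:
  assumes C_int: "\<And>i. integrable M (\<lambda>\<omega>. C (Z i \<omega>))"
    and C_bernstein: "\<And>n (w :: nat \<Rightarrow> real) t. n \<ge> 1 \<Longrightarrow> t \<ge> 0 \<Longrightarrow>
        measure M {\<omega> \<in> space M.
           \<bar>\<Sum>i<n. w i * (C (Z i \<omega>) - integral\<^sup>L M (\<lambda>\<omega>'. C (Z i \<omega>')))\<bar>
             > \<sigma>L * (sqrt (\<Sum>i<n. (w i)\<^sup>2) * sqrt t + (MAX i\<in>{..<n}. \<bar>w i\<bar>) * t)}
        \<le> 2 * exp (- c * t)"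
    and n: "n \<ge> 1"
  shows "measure M {\<omega> \<in> space M. \<bar>\<Sum>i<n. 1 / real n * (C (Z i \<omega>) - integral\<^sup>L M (\<lambda>\<omega>'. C (Z i \<omega>')))\<bar>
            > 2 * \<sigma>L} \<le> 2 * exp (- c * real n)"
    "{\<omega> \<in> space M. \<bar>\<Sum>i<n. 1 / real n * (C (Z i \<omega>) - integral\<^sup>L M (\<lambda>\<omega>'. C (Z i \<omega>')))\<bar>
            > 2 * \<sigma>L} \<in> sets M"
proof -
  have e: "sqrt (real n / real n) + real n / real n = 2" using n by simp
  show "measure M {\<omega> \<in> space M. \<bar>\<Sum>i<n. 1 / real n * (C (Z i \<omega>) - integral\<^sup>L M (\<lambda>\<omega>'. C (Z i \<omega>')))\<bar>
            > 2 * \<sigma>L} \<le> 2 * exp (- c * real n)"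
    using C_bernstein[where t="real n" and w="\<lambda>_. 1 / real n", OF n]
    unfolding const_w[OF n] e by (simp add: mult.commute)
  have "(\<lambda>\<omega>. C (Z i \<omega>)) \<in> borel_measurable M" for i using C_int by auto
  then show "{\<omega> \<in> space M. \<bar>\<Sum>i<n. 1 / real n * (C (Z i \<omega>) - integral\<^sup>L M (\<lambda>\<omega>'. C (Z i \<omega>')))\<bar>
            > 2 * \<sigma>L} \<in> sets M" by measurable
qed



lemma emp_lip:
  assumes W: "\<And>i. zs i \<in> W"
    and C_lip: "\<And>b1 b2 z. z \<in> W \<Longrightarrow> \<bar>L b1 z - L b2 z\<bar> \<le> C z * norm (b1 - b2)"
    and n: "n \<ge> 1"
  shows "\<bar>emp_loss L n b zs - emp_loss L n g zs\<bar> \<le> (\<Sum>i<n. C (zs i)) / real n * norm (b - g)"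
proof -
  have "\<bar>emp_loss L n b zs - emp_loss L n g zs\<bar> = \<bar>\<Sum>i<n. L b (zs i) - L g (zs i)\<bar> / real n"
    unfolding emp_loss_def by (simp add: sum_subtractf diff_divide_distrib[symmetric])
  also have "\<dots> \<le> (\<Sum>i<n. \<bar>L b (zs i) - L g (zs i)\<bar>) / real n"
    by (intro divide_right_mono sum_abs) simp
  also have "\<dots> \<le> (\<Sum>i<n. C (zs i) * norm (b - g)) / real n"
    by (intro divide_right_mono sum_mono C_lip W) simp
  also have "\<dots> = (\<Sum>i<n. C (zs i)) / real n * norm (b - g)"
    by (simp add: sum_distrib_right)
  finally show ?thesis .
qed

lemma pop_lip:
  assumes L_int: "\<And>b i. integrable M (\<lambda>\<omega>. L b (Z i \<omega>))"
    and C_int: "\<And>i. integrable M (\<lambda>\<omega>. C (Z i \<omega>))"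
    and W: "\<And>i \<omega>. \<omega> \<in> space M \<Longrightarrow> Z i \<omega> \<in> W"
    and C_lip: "\<And>b1 b2 z. z \<in> W \<Longrightarrow> \<bar>L b1 z - L b2 z\<bar> \<le> C z * norm (b1 - b2)"
    and C_nonneg: "\<And>z. C z \<ge> 0"
    and C_mean: "\<And>i. integral\<^sup>L M (\<lambda>\<omega>. \<bar>C (Z i \<omega>)\<bar>) \<le> C\<mu>"
    and n: "n \<ge> 1"
  shows "\<bar>pop_loss M L Z n b - pop_loss M L Z n g\<bar> \<le> C\<mu> * norm (b - g)"
proof -
  have e: "\<And>b. pop_loss M L Z n b = (\<Sum>i<n. integral\<^sup>L M (\<lambda>\<omega>. L b (Z i \<omega>))) / real n"
    by (rule pop_loss_eq) (rule L_int)
  have one: "\<bar>integral\<^sup>L M (\<lambda>\<omega>. L b (Z i \<omega>)) - integral\<^sup>L M (\<lambda>\<omega>. L g (Z i \<omega>))\<bar> \<le> C\<mu> * norm (b - g)" for i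
  proof -
    have d: "integral\<^sup>L M (\<lambda>\<omega>. L b (Z i \<omega>)) - integral\<^sup>L M (\<lambda>\<omega>. L g (Z i \<omega>))
        = integral\<^sup>L M (\<lambda>\<omega>. L b (Z i \<omega>) - L g (Z i \<omega>))" using L_int by simp
    have ci: "integrable M (\<lambda>\<omega>. C (Z i \<omega>) * norm (b - g))" using C_int by simp
    have up: "integral\<^sup>L M (\<lambda>\<omega>. L b (Z i \<omega>) - L g (Z i \<omega>)) \<le> integral\<^sup>L M (\<lambda>\<omega>. C (Z i \<omega>) * norm (b - g))"
      by (rule integral_mono) (use L_int ci C_lip[OF W] in \<open>auto simp: abs_le_iff\<close>)
    have lo: "integral\<^sup>L M (\<lambda>\<omega>. L g (Z i \<omega>) - L b (Z i \<omega>)) \<le> integral\<^sup>L M (\<lambda>\<omega>. C (Z i \<omega>) * norm (b - g))"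
    proof (rule integral_mono)
      fix \<omega> assume "\<omega> \<in> space M"
      then show "L g (Z i \<omega>) - L b (Z i \<omega>) \<le> C (Z i \<omega>) * norm (b - g)"
        using C_lip[of "Z i \<omega>" b g] W[of \<omega> i] by (simp add: abs_le_iff)
    qed (use L_int ci in auto)
    have "integral\<^sup>L M (\<lambda>\<omega>. C (Z i \<omega>) * norm (b - g)) = integral\<^sup>L M (\<lambda>\<omega>. \<bar>C (Z i \<omega>)\<bar>) * norm (b - g)"
      using C_nonneg by simp
    also have "\<dots> \<le> C\<mu> * norm (b - g)" using C_mean[of i] by (simp add: mult_right_mono)
    finally have "integral\<^sup>L M (\<lambda>\<omega>. C (Z i \<omega>) * norm (b - g)) \<le> C\<mu> * norm (b - g)" .
    moreover have "integral\<^sup>L M (\<lambda>\<omega>. L g (Z i \<omega>) - L b (Z i \<omega>)) = - integral\<^sup>L M (\<lambda>\<omega>. L b (Z i \<omega>) - L g (Z i \<omega>))"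
      using L_int by simp
    ultimately show ?thesis using d up lo by (simp add: abs_le_iff)
  qed
  have "\<bar>pop_loss M L Z n b - pop_loss M L Z n g\<bar>
      = \<bar>\<Sum>i<n. integral\<^sup>L M (\<lambda>\<omega>. L b (Z i \<omega>)) - integral\<^sup>L M (\<lambda>\<omega>. L g (Z i \<omega>))\<bar> / real n"
    unfolding e by (simp add: sum_subtractf diff_divide_distrib[symmetric])
  also have "\<dots> \<le> (\<Sum>i<n. C\<mu> * norm (b - g)) / real n"
    by (intro divide_right_mono order.trans[OF sum_abs] sum_mono one) simp
  also have "\<dots> = C\<mu> * norm (b - g)" using n by simp
  finally show ?thesis .
qed

lemma geom_sum:
  fixes r :: real assumes r: "0 \<le> r" "r \<le> 1/2"
  shows "(\<Sum>k\<in>{m..N}. r ^ k) \<le> 2 * r ^ m"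
proof -
  have *: "(\<Sum>k\<in>{m..N}. r ^ k) \<le> 2 * r ^ m - 2 * r ^ (Suc N)" if "m \<le> Suc N" for N
    using that
  proof (induction N)
    case 0
    then show ?case
    proof (cases m)
      case 0 then show ?thesis using r by simp
    next
      case (Suc m') then have "m = 1" using 0 by simp
      then show ?thesis using r by (simp add: power2_eq_square)
    qed
  next
    case (Suc N)
    show ?case
    proof (cases "m \<le> Suc N")
      case True
      have "(\<Sum>k\<in>{m..Suc N}. r ^ k) = (\<Sum>k\<in>{m..N}. r ^ k) + r ^ Suc N"
        using True by (simp add: sum.atLeast_Suc_atMost_Suc_shift atLeastAtMostSuc_conv)
      also have "\<dots> \<le> 2 * r ^ m - 2 * r ^ Suc N + r ^ Suc N" using Suc.IH True by simp
      also have "\<dots> \<le> 2 * r ^ m - 2 * r ^ Suc (Suc N)"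
      proof -
        have "r ^ Suc (Suc N) = r * r ^ Suc N" by simp
        also have "\<dots> \<le> 1/2 * r ^ Suc N" using r by (intro mult_right_mono) auto
        finally show ?thesis by simp
      qed
      finally show ?thesis .
    next
      case False
      then have "m = Suc (Suc N)" using Suc.prems by simp
      then show ?thesis by simp
    qed
  qed
  then show ?thesis
  proof (cases "m \<le> Suc N")
    case True
    have "0 \<le> r ^ Suc N" using r by simp
    then show ?thesis using *[OF True] by linarith
  next
    case False then show ?thesis using r by simp
  qed
qed

lemma pen_sum_le:
  fixes b :: "real^'p"
  assumes a: "a > 0" and lam: "lam > 0"
  shows "(\<Sum>j\<in>UNIV. penalty lam a \<bar>b $ j\<bar>) \<le> real (card {j. b $ j \<noteq> 0}) * penalty lam a (a * lam)"
proof -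
  have "(\<Sum>j\<in>UNIV. penalty lam a \<bar>b $ j\<bar>) = (\<Sum>j\<in>UNIV. if b $ j \<noteq> 0 then penalty lam a \<bar>b $ j\<bar> else 0)"
    using pen_zero[OF a lam] by (intro sum.cong) auto
  also have "\<dots> = (\<Sum>j\<in>{j. b $ j \<noteq> 0}. penalty lam a \<bar>b $ j\<bar>)"
    by (simp add: sum.If_cases)
  also have "\<dots> \<le> (\<Sum>j\<in>{j. b $ j \<noteq> 0}. penalty lam a (a * lam))"
    by (intro sum_mono pen_bounds(2)[OF a lam]) simp
  finally show ?thesis by simp
qed

lemma pen_sum_eq:
  fixes b :: "real^'p"
  assumes a: "a > 0" and lam: "lam > 0" and big: "\<And>j. b $ j \<noteq> 0 \<Longrightarrow> \<bar>b $ j\<bar> \<ge> a * lam"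
  shows "(\<Sum>j\<in>UNIV. penalty lam a \<bar>b $ j\<bar>) = real (card {j. b $ j \<noteq> 0}) * penalty lam a (a * lam)"
proof -
  have "(\<Sum>j\<in>UNIV. penalty lam a \<bar>b $ j\<bar>) = (\<Sum>j\<in>UNIV. if b $ j \<noteq> 0 then penalty lam a (a*lam) else 0)"
  proof (rule sum.cong)
    fix j show "penalty lam a \<bar>b $ j\<bar> = (if b $ j \<noteq> 0 then penalty lam a (a*lam) else 0)"
    proof (cases "b $ j = 0")
      case True then show ?thesis using pen_zero[OF a lam] by simp
    next
      case False then show ?thesis using pen_ge[OF a lam big[OF False]] by simp
    qed
  qed simp
  also have "\<dots> = real (card {j. b $ j \<noteq> 0}) * penalty lam a (a * lam)"
    by (simp add: sum.If_cases)
  finally show ?thesis .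
qed



theorem mainTheorem10:
  fixes M :: "'o measure"
    and Z :: "nat \<Rightarrow> 'o \<Rightarrow> real^'q"
    and W :: "(real^'q) set"
    and L :: "real^'p \<Rightarrow> real^'q \<Rightarrow> real"
    and C :: "real^'q \<Rightarrow> real"
    and \<sigma> \<sigma>L C\<mu> c :: real
  assumes prob: "prob_space M"
    and p_gt2: "CARD('p) > 2"
    (* i.i.d. sample with support W *)
    and indep: "prob_space.indep_vars M (\<lambda>_. borel) Z UNIV"
    and ident: "\<And>i. distr M borel (Z i) = distr M borel (Z 0)"
    and support: "\<And>i \<omega>. \<omega> \<in> space M \<Longrightarrow> Z i \<omega> \<in> W"
    (* L measurable, C^1 in beta for a.e. z *)
    and L_meas: "(\<lambda>(b, z). L b z) \<in> borel_measurable (borel \<Otimes>\<^sub>M borel)"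
    and L_C1: "AE \<omega> in M. \<forall>i. \<exists>D :: (real^'p) \<Rightarrow> ((real^'p) \<Rightarrow>\<^sub>L real).
                  (\<forall>b. ((\<lambda>b'. L b' (Z i \<omega>)) has_derivative blinfun_apply (D b)) (at b))
                  \<and> continuous_on UNIV D"
    (* (A2) *)
    and \<sigma>_ge1: "\<sigma> \<ge> 1"
    and c_range: "0 < c" "c \<le> 1/2"
    and L_int: "\<And>b i. integrable M (\<lambda>\<omega>. L b (Z i \<omega>))"
    and L_psi1: "\<And>b i. psi1_norm M (\<lambda>\<omega>. L b (Z i \<omega>) - integral\<^sup>L M (\<lambda>\<omega>'. L b (Z i \<omega>'))) \<le> ereal \<sigma>"
    and L_bernstein: "\<And>b n (w :: nat \<Rightarrow> real) t. n \<ge> 1 \<Longrightarrow> t \<ge> 0 \<Longrightarrow>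
        measure M {\<omega> \<in> space M.
           \<bar>\<Sum>i<n. w i * (L b (Z i \<omega>) - integral\<^sup>L M (\<lambda>\<omega>'. L b (Z i \<omega>')))\<bar>
             > \<sigma> * (sqrt (\<Sum>i<n. (w i)\<^sup>2) * sqrt t + (MAX i\<in>{..<n}. \<bar>w i\<bar>) * t)}
        \<le> 2 * exp (- c * t)"
    (* (A3) *)
    and C_meas: "C \<in> borel_measurable borel"
    and C_nonneg: "\<And>z. C z \<ge> 0"
    and \<sigma>L_ge1: "\<sigma>L \<ge> 1"
    and C\<mu>_ge1: "C\<mu> \<ge> 1"
    and C_int: "\<And>i. integrable M (\<lambda>\<omega>. C (Z i \<omega>))"
    and C_psi1: "\<And>i. psi1_norm M (\<lambda>\<omega>. C (Z i \<omega>) - integral\<^sup>L M (\<lambda>\<omega>'. C (Z i \<omega>'))) \<le> ereal \<sigma>L"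
    and C_mean: "\<And>i. integral\<^sup>L M (\<lambda>\<omega>. \<bar>C (Z i \<omega>)\<bar>) \<le> C\<mu>"
    and C_lip: "\<And>b1 b2 z. z \<in> W \<Longrightarrow> \<bar>L b1 z - L b2 z\<bar> \<le> C z * norm (b1 - b2)"
    (* c is the absolute Bernstein constant: the same tail bound for the sub-exponential C(Z_i) *)
    and C_bernstein: "\<And>n (w :: nat \<Rightarrow> real) t. n \<ge> 1 \<Longrightarrow> t \<ge> 0 \<Longrightarrow>
        measure M {\<omega> \<in> space M.
           \<bar>\<Sum>i<n. w i * (C (Z i \<omega>) - integral\<^sup>L M (\<lambda>\<omega>'. C (Z i \<omega>')))\<bar>
             > \<sigma>L * (sqrt (\<Sum>i<n. (w i)\<^sup>2) * sqrt t + (MAX i\<in>{..<n}. \<bar>w i\<bar>) * t)}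
        \<le> 2 * exp (- c * t)"
  shows "\<exists>ct > 0. \<forall>(n::nat) (U_L::real) (a::real) (lam::real) (R::real)
            (bstar::real^'p) (beps::real^'p) (epshat::real) (s::nat)
            (\<Gamma>::real) (\<epsilon>::real) (pu::nat) (bh::'o \<Rightarrow> real^'p).
     n \<ge> 1 \<and> U_L \<ge> 1 \<and> 0 < a \<and> a < 1 / U_L \<and> 0 < lam \<and> R \<ge> 1
     \<comment> \<open>coordinatewise Lipschitz partial derivatives of the empirical loss\<close>
     \<and> (AE \<omega> in M. \<forall>b \<delta> j.
          \<bar>partial (\<lambda>b'. emp_loss L n b' (\<lambda>i. Z i \<omega>)) (b + \<delta> *\<^sub>R axis j 1) j
           - partial (\<lambda>b'. emp_loss L n b' (\<lambda>i. Z i \<omega>)) b j\<bar> \<le> U_L * \<bar>\<delta>\<bar>)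
     \<comment> \<open>beta-star is a population minimizer with sup-norm at most R\<close>
     \<and> (\<forall>b. pop_loss M L Z n bstar \<le> pop_loss M L Z n b) \<and> (\<forall>j. \<bar>bstar $ j\<bar> \<le> R)
     \<comment> \<open>(A1) A-sparsity\<close>
     \<and> (\<forall>j. \<bar>beps $ j\<bar> \<le> R) \<and> s = card {j. beps $ j \<noteq> 0} \<and> s \<ge> 1 \<and> epshat \<ge> 0
     \<and> pop_loss M L Z n beps - pop_loss M L Z n bstar \<le> epshat
     \<and> \<Gamma> \<ge> 0 \<and> 0 < \<epsilon> \<and> \<epsilon> \<le> 1
     \<comment> \<open>(i)\<close>
     \<and> (AE \<omega> in M. (\<forall>j. \<bar>bh \<omega> $ j\<bar> \<le> R) \<and> S3ONC L U_L lam a n (\<lambda>i. Z i \<omega>) (bh \<omega>))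
     \<comment> \<open>(ii)\<close>
     \<and> (AE \<omega> in M. pen_loss L lam a n (bh \<omega>) (\<lambda>i. Z i \<omega>)
                      \<le> pen_loss L lam a n beps (\<lambda>i. Z i \<omega>) + \<Gamma>)
     \<comment> \<open>(iii)\<close>
     \<and> pu > s
     \<and> (\<forall>pt::nat. pu \<le> pt \<and> pt \<le> CARD('p) \<longrightarrow>
          (real pt - real s) * penalty lam a (a * lam)
            > 4 * \<sigma> / (real n * c) * zeta1 \<sigma>L C\<mu> CARD('p) R \<epsilon> * real pt
              + 2 * \<sigma> / sqrt (real n) * sqrt (2 * real pt / c * zeta1 \<sigma>L C\<mu> CARD('p) R \<epsilon>)
              + \<Gamma> + 2 * \<epsilon> + epshat)
     \<longrightarrow> (\<exists>A \<in> sets M.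
            measure M A \<ge> 1 - 2 * (real CARD('p) + 1) * exp (- ct * real n)
                                     - 6 * exp (- real pu * zeta1 \<sigma>L C\<mu> CARD('p) R \<epsilon>)
          \<and> (\<forall>\<omega> \<in> A. pop_loss M L Z n (bh \<omega>) - pop_loss M L Z n bstar
                \<le> real s * penalty lam a (a * lam)
                  + 2 * \<sigma> / sqrt (real n) * sqrt (2 * real pu / c * zeta1 \<sigma>L C\<mu> CARD('p) R \<epsilon>)
                  + 4 * \<sigma> / real n * (real pu / c) * zeta1 \<sigma>L C\<mu> CARD('p) R \<epsilon>
                  + 2 * \<epsilon> + epshat + \<Gamma>))"
proof -
  interpret P: prob_space M by (rule prob)
  have c0: "c > 0" using c_range by simp
  show ?thesis
  proof (rule exI[where x=c], intro conjI allI impI)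
    show "c > 0" by (rule c0)
    fix n :: nat and U_L a lam R :: real and bstar beps :: "real^'p" and epshat :: real and s :: nat
      and \<Gamma> \<epsilon> :: real and pu :: nat and bh :: "'o \<Rightarrow> real^'p"
    let ?pop = "pop_loss M L Z n"
    let ?emp = "\<lambda>b \<omega>. emp_loss L n b (\<lambda>i. Z i \<omega>)"
    let ?P = "penalty lam a (a * lam)"
    define p where "p = CARD('p)"
    define \<zeta> where "\<zeta> = zeta1 \<sigma>L C\<mu> CARD('p) R \<epsilon>"
    assume H: "1 \<le> n \<and> 1 \<le> U_L \<and> 0 < a \<and> a < 1 / U_L \<and> 0 < lam \<and> 1 \<le> R \<and>
       (AE \<omega> in M. \<forall>b \<delta> j.
          \<bar>partial (\<lambda>b'. emp_loss L n b' (\<lambda>i. Z i \<omega>)) (b + \<delta> *\<^sub>R axis j 1) j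
           - partial (\<lambda>b'. emp_loss L n b' (\<lambda>i. Z i \<omega>)) b j\<bar> \<le> U_L * \<bar>\<delta>\<bar>) \<and>
       (\<forall>b. pop_loss M L Z n bstar \<le> pop_loss M L Z n b) \<and> (\<forall>j. \<bar>bstar $ j\<bar> \<le> R) \<and>
       (\<forall>j. \<bar>beps $ j\<bar> \<le> R) \<and> s = card {j. beps $ j \<noteq> 0} \<and> 1 \<le> s \<and> 0 \<le> epshat \<and>
       pop_loss M L Z n beps - pop_loss M L Z n bstar \<le> epshat \<and>
       0 \<le> \<Gamma> \<and> 0 < \<epsilon> \<and> \<epsilon> \<le> 1 \<and>
       (AE \<omega> in M. (\<forall>j. \<bar>bh \<omega> $ j\<bar> \<le> R) \<and> S3ONC L U_L lam a n (\<lambda>i. Z i \<omega>) (bh \<omega>)) \<and>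
       (AE \<omega> in M. pen_loss L lam a n (bh \<omega>) (\<lambda>i. Z i \<omega>) \<le> pen_loss L lam a n beps (\<lambda>i. Z i \<omega>) + \<Gamma>) \<and>
       s < pu \<and>
       (\<forall>pt. pu \<le> pt \<and> pt \<le> CARD('p) \<longrightarrow>
          4 * \<sigma> / (real n * c) * zeta1 \<sigma>L C\<mu> CARD('p) R \<epsilon> * real pt +
          2 * \<sigma> / sqrt (real n) * sqrt (2 * real pt / c * zeta1 \<sigma>L C\<mu> CARD('p) R \<epsilon>) +
          \<Gamma> + 2 * \<epsilon> + epshat
          < (real pt - real s) * penalty lam a (a * lam))"
    have n1: "n \<ge> 1" using H by blast
    have a0: "0 < a" using H by blast
    have aU: "a < 1 / U_L" using H by blast
    have UL1: "1 \<le> U_L" using H by blast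
    have lam0: "0 < lam" using H by blast
    have R1: "1 \<le> R" using H by blast
    have bmin: "\<forall>b. ?pop bstar \<le> ?pop b" using H by blast
    have beR: "\<forall>j. \<bar>beps $ j\<bar> \<le> R" using H by blast
    have sdef: "s = card {j. beps $ j \<noteq> 0}" using H by blast
    have eh0: "0 \<le> epshat" using H by blast
    have gap: "?pop beps - ?pop bstar \<le> epshat" using H by blast
    have \<Gamma>0: "0 \<le> \<Gamma>" using H by blast
    have e0: "0 < \<epsilon>" using H by blast
    have e1: "\<epsilon> \<le> 1" using H by blast
    have AE1: "AE \<omega> in M. (\<forall>j. \<bar>bh \<omega> $ j\<bar> \<le> R) \<and> S3ONC L U_L lam a n (\<lambda>i. Z i \<omega>) (bh \<omega>)" using H by blast
    have AE2: "AE \<omega> in M. pen_loss L lam a n (bh \<omega>) (\<lambda>i. Z i \<omega>) \<le> pen_loss L lam a n beps (\<lambda>i. Z i \<omega>) + \<Gamma>"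
      using H by blast
    have pus: "s < pu" using H by blast
    have iii0: "\<forall>pt. pu \<le> pt \<and> pt \<le> CARD('p) \<longrightarrow>
          4 * \<sigma> / (real n * c) * zeta1 \<sigma>L C\<mu> CARD('p) R \<epsilon> * real pt +
          2 * \<sigma> / sqrt (real n) * sqrt (2 * real pt / c * zeta1 \<sigma>L C\<mu> CARD('p) R \<epsilon>) +
          \<Gamma> + 2 * \<epsilon> + epshat
          < (real pt - real s) * penalty lam a (a * lam)" using H by blast
    have iii: "\<And>pt. pu \<le> pt \<Longrightarrow> pt \<le> p \<Longrightarrow>
          4 * \<sigma> / (real n * c) * \<zeta> * real pt + 2 * \<sigma> / sqrt (real n) * sqrt (2 * real pt / c * \<zeta>)
          + \<Gamma> + 2 * \<epsilon> + epshat < (real pt - real s) * ?P"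
      using iii0 unfolding p_def \<zeta>_def by blast
    have p2: "p > 2" using p_gt2 p_def by simp
    define Y where "Y = \<sigma>L + C\<mu>"
    define X where "X = Y * R / \<epsilon>"
    have Y2: "Y \<ge> 2" using \<sigma>L_ge1 C\<mu>_ge1 Y_def by simp
    have X2: "X \<ge> 2"
    proof -
      have "Y * R \<ge> Y" using R1 Y2 mult_left_mono[of 1 R Y] by simp
      moreover have "Y * R / \<epsilon> \<ge> Y * R" using e0 e1 Y2 R1
        by (simp add: le_divide_eq mult_left_le)
      ultimately show ?thesis using Y2 unfolding X_def by linarith
    qed
    have arg: "3 * (\<sigma>L + C\<mu>) * real CARD('p) * exp 1 * R / \<epsilon> = 3 * exp 1 * real p * X"
      unfolding X_def Y_def p_def by (simp add: algebra_simps)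
    have argbig: "3 * exp 1 * real p * X \<ge> 2"
    proof -
      have "exp 1 \<ge> (1::real)" by simp
      moreover have "real p \<ge> 1" using p2 by simp
      ultimately have "exp 1 * real p \<ge> 1 * 1" by (intro mult_mono) auto
      then have "(exp 1 * real p) * X \<ge> 1 * X" using X2 by (intro mult_right_mono) auto
      moreover have "3 * exp 1 * real p * X = 3 * ((exp 1 * real p) * X)" by (simp add: mult_ac)
      ultimately show ?thesis using X2 by linarith
    qed
    have expz: "exp \<zeta> = 3 * exp 1 * real p * X"
      unfolding \<zeta>_def zeta1_def arg by (rule exp_ln) (use argbig in linarith)
    have z0: "\<zeta> > 0"
    proof -
      have "exp \<zeta> > 1" using expz argbig by linarith
      then show ?thesis by simp
    qed
    have ez: "exp (- \<zeta>) \<le> 1/2"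
    proof -
      have "exp (- \<zeta>) = 1 / exp \<zeta>" by (simp add: exp_minus inverse_eq_divide)
      also have "\<dots> \<le> 1 / 2" using expz argbig by (intro divide_left_mono) auto
      finally show ?thesis .
    qed
    define tt where "tt = (\<lambda>pt::nat. 2 * real pt * \<zeta> / c)"
    define dev where "dev = (\<lambda>pt::nat. \<sigma> * (sqrt (tt pt / real n) + tt pt / real n))"
    define I where "I = {pu..max pu p}"
    define qq where "qq = (\<lambda>pt::nat. min pt p)"
    define hh where "hh = (\<lambda>pt. 2 * \<epsilon> / (Y * sqrt (real (qq pt))))"
    define KK where "KK = (\<lambda>pt. nat \<lceil>R / hh pt\<rceil>)"
    define NN where "NN = (\<lambda>pt. net (qq pt) (hh pt) (KK pt) :: (real^'p) set)"
    define Bad where "Bad = (\<lambda>b t. {\<omega> \<in> space M. \<bar>?emp b \<omega> - ?pop b\<bar> > \<sigma> * (sqrt (t / real n) + t / real n)})"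
    define BadC where "BadC = {\<omega> \<in> space M. \<bar>\<Sum>i<n. 1 / real n * (C (Z i \<omega>) - integral\<^sup>L M (\<lambda>\<omega>'. C (Z i \<omega>')))\<bar> > 2 * \<sigma>L}"
    define B where "B = BadC \<union> Bad beps (tt pu) \<union> (\<Union>pt\<in>I. \<Union>g\<in>NN pt. Bad g (tt pt))"
    have Bad_sets: "Bad b t \<in> sets M" for b t
      unfolding Bad_def by (rule dev_L_sets) (rule L_int)
    have Bad_meas: "t \<ge> 0 \<Longrightarrow> measure M (Bad b t) \<le> 2 * exp (- c * t)" for b t
      unfolding Bad_def by (rule dev_L[where L=L and Z=Z]) (use L_int L_bernstein n1 in auto)
    have BadC_sets: "BadC \<in> sets M" and BadC_meas: "measure M BadC \<le> 2 * exp (- c * real n)"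
      unfolding BadC_def using dev_C[where C=C and Z=Z and M=M, OF C_int C_bernstein n1] by auto
    have finI: "finite I" unfolding I_def by simp
    have finNN: "finite (NN pt)" for pt unfolding NN_def by (rule net_finite)
    have B_sets: "B \<in> sets M"
      unfolding B_def by (intro sets.Un sets.finite_UN finI finNN Bad_sets BadC_sets)
    have tt0: "tt pt \<ge> 0" for pt unfolding tt_def using z0 c0 by simp
    have ctt: "exp (- c * tt pt) = exp (- \<zeta>) ^ pt * exp (- \<zeta>) ^ pt" for pt
    proof -
      have "- c * tt pt = real pt * (- \<zeta>) + real pt * (- \<zeta>)" unfolding tt_def using c0 by (simp add: field_simps)
      then have "exp (- c * tt pt) = exp (real pt * (- \<zeta>)) * exp (real pt * (- \<zeta>))"
        by (simp only: exp_add)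
      then show ?thesis by (simp only: exp_of_nat_mult)
    qed
    have qq1: "qq pt \<ge> 1" "qq pt \<le> p" "qq pt \<le> pt" if "pt \<in> I" for pt
      using that p2 pus unfolding qq_def I_def by auto
    have hh0: "hh pt > 0" if "pt \<in> I" for pt
      unfolding hh_def using qq1[OF that] e0 Y2 by simp
    have RK: "real (KK pt) \<ge> R / hh pt" for pt
      unfolding KK_def by linarith
    have card_NN: "real (card (NN pt)) \<le> exp \<zeta> ^ pt" if "pt \<in> I" for pt
    proof -
      let ?q = "qq pt"
      have sq: "sqrt (real ?q) \<ge> 1" using qq1[OF that] by simp
      have Rh: "R / hh pt = X * sqrt (real ?q) / 2"
        unfolding hh_def X_def using e0 Y2 sq by (simp add: field_simps)
      have "real (KK pt) \<le> R / hh pt + 1"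
        unfolding KK_def using hh0[OF that] R1 by (simp add: of_nat_nat)
      then have K3: "2 * real (KK pt) + 1 \<le> X * sqrt (real ?q) + 3" using Rh by simp
      have "real (card (NN pt)) \<le> real (p choose ?q) * (2 * real (KK pt) + 1) ^ ?q"
        unfolding NN_def p_def by (rule net_card)
      also have "\<dots> \<le> real (p choose ?q) * (X * sqrt (real ?q) + 3) ^ ?q"
        by (intro mult_left_mono power_mono K3) auto
      also have "\<dots> \<le> (3 * exp 1 * real p * X) ^ ?q" by (rule count_bound[OF X2])
      also have "\<dots> = exp \<zeta> ^ ?q" using expz by simp
      also have "\<dots> \<le> exp \<zeta> ^ pt" using qq1[OF that] z0 by (intro power_increasing) auto
      finally show ?thesis .
    qed
    have per_pt: "measure M (\<Union>g\<in>NN pt. Bad g (tt pt)) \<le> 2 * exp (- \<zeta>) ^ pt" if "pt \<in> I" for pt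
    proof -
      have "measure M (\<Union>g\<in>NN pt. Bad g (tt pt)) \<le> (\<Sum>g\<in>NN pt. measure M (Bad g (tt pt)))"
        by (rule measure_UNION_le) (use finNN Bad_sets in auto)
      also have "\<dots> \<le> (\<Sum>g\<in>NN pt. 2 * exp (- \<zeta>) ^ pt * exp (- \<zeta>) ^ pt)"
      proof (rule sum_mono)
        fix g show "measure M (Bad g (tt pt)) \<le> 2 * exp (- \<zeta>) ^ pt * exp (- \<zeta>) ^ pt"
          using Bad_meas[OF tt0, of g pt] ctt[of pt] by (simp add: mult.assoc)
      qed
      also have "\<dots> = real (card (NN pt)) * (2 * exp (- \<zeta>) ^ pt * exp (- \<zeta>) ^ pt)" by simp
      also have "\<dots> \<le> exp \<zeta> ^ pt * (2 * exp (- \<zeta>) ^ pt * exp (- \<zeta>) ^ pt)"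
        by (intro mult_right_mono card_NN[OF that]) auto
      also have "\<dots> = 2 * exp (- \<zeta>) ^ pt"
      proof -
        have "exp \<zeta> ^ pt * exp (- \<zeta>) ^ pt = 1" by (simp add: power_mult_distrib[symmetric] exp_minus)
        then show ?thesis by (simp add: algebra_simps)
      qed
      finally show ?thesis .
    qed
    have B_meas: "measure M B \<le> 2 * (real CARD('p) + 1) * exp (- c * real n) + 6 * exp (- real pu * \<zeta>)"
    proof -
      have "measure M B \<le> measure M (BadC \<union> Bad beps (tt pu)) + measure M (\<Union>pt\<in>I. \<Union>g\<in>NN pt. Bad g (tt pt))"
        unfolding B_def by (rule measure_Un_le) (intro sets.Un sets.finite_UN finI finNN Bad_sets BadC_sets)+
      also have "measure M (BadC \<union> Bad beps (tt pu)) \<le> measure M BadC + measure M (Bad beps (tt pu))"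
        by (rule measure_Un_le) (use BadC_sets Bad_sets in auto)
      also have "measure M (\<Union>pt\<in>I. \<Union>g\<in>NN pt. Bad g (tt pt)) \<le> (\<Sum>pt\<in>I. measure M (\<Union>g\<in>NN pt. Bad g (tt pt)))"
        by (rule measure_UNION_le) (intro sets.Un sets.finite_UN finI finNN Bad_sets BadC_sets)+
      also have "\<dots> \<le> (\<Sum>pt\<in>I. 2 * exp (- \<zeta>) ^ pt)" by (intro sum_mono per_pt)
      also have "\<dots> = 2 * (\<Sum>pt\<in>I. exp (- \<zeta>) ^ pt)" by (simp add: sum_distrib_left)
      also have "\<dots> \<le> 2 * (2 * exp (- \<zeta>) ^ pu)"
        unfolding I_def using geom_sum[of "exp (- \<zeta>)" pu "max pu p"] ez by simp
      finally have 1: "measure M B \<le> measure M BadC + measure M (Bad beps (tt pu)) + 4 * exp (- \<zeta>) ^ pu"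
        by simp
      have 2: "measure M (Bad beps (tt pu)) \<le> 2 * exp (- \<zeta>) ^ pu"
      proof -
        have "measure M (Bad beps (tt pu)) \<le> 2 * (exp (- \<zeta>) ^ pu * exp (- \<zeta>) ^ pu)"
          using Bad_meas[OF tt0, of beps pu] ctt by simp
        also have "\<dots> \<le> 2 * (exp (- \<zeta>) ^ pu * 1)"
          using ez z0 by (intro mult_left_mono power_le_one) auto
        finally show ?thesis by simp
      qed
      have 3: "measure M BadC \<le> 2 * (real CARD('p) + 1) * exp (- c * real n)"
      proof -
        have "0 \<le> real CARD('p) * (2 * exp (- c * real n))" by simp
        moreover have "2 * (real CARD('p) + 1) * exp (- c * real n) = 2 * exp (- c * real n) + real CARD('p) * (2 * exp (- c * real n))"
          by (simp add: algebra_simps)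
        ultimately show ?thesis using BadC_meas by linarith
      qed
      have 4: "exp (- \<zeta>) ^ pu = exp (- real pu * \<zeta>)"
        by (simp add: exp_of_nat_mult[symmetric])
      show ?thesis using 1 2 3 4 by linarith
    qed
    have "AE \<omega> in M. ((\<forall>j. \<bar>bh \<omega> $ j\<bar> \<le> R) \<and> S3ONC L U_L lam a n (\<lambda>i. Z i \<omega>) (bh \<omega>))
        \<and> pen_loss L lam a n (bh \<omega>) (\<lambda>i. Z i \<omega>) \<le> pen_loss L lam a n beps (\<lambda>i. Z i \<omega>) + \<Gamma>"
      using AE1 AE2 by (rule AE_conjI)
    then obtain N where N: "\<And>\<omega>. \<omega> \<in> space M - N \<Longrightarrow>
        ((\<forall>j. \<bar>bh \<omega> $ j\<bar> \<le> R) \<and> S3ONC L U_L lam a n (\<lambda>i. Z i \<omega>) (bh \<omega>))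
        \<and> pen_loss L lam a n (bh \<omega>) (\<lambda>i. Z i \<omega>) \<le> pen_loss L lam a n beps (\<lambda>i. Z i \<omega>) + \<Gamma>"
      and Nnull: "N \<in> null_sets M"
      by (rule AE_E3) blast
    define A where "A = (space M - B) - N"
    have A_sets: "A \<in> sets M" unfolding A_def using B_sets Nnull by auto
    have "measure M A = measure M (space M - B)"
      unfolding A_def by (rule measure_Diff_null_set) (use B_sets Nnull in auto)
    also have "\<dots> = 1 - measure M B" using P.prob_compl[OF B_sets] by simp
    finally have A_meas: "measure M A \<ge> 1 - 2 * (real CARD('p) + 1) * exp (- c * real n)
                                     - 6 * exp (- real pu * \<zeta>)" using B_meas by simp
    have main: "?pop (bh \<omega>) - ?pop bstar \<le> real s * ?P
                  + 2 * \<sigma> / sqrt (real n) * sqrt (2 * real pu / c * \<zeta>)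
                  + 4 * \<sigma> / real n * (real pu / c) * \<zeta>
                  + 2 * \<epsilon> + epshat + \<Gamma>" if \<omega>A: "\<omega> \<in> A" for \<omega>
    proof -
      have \<omega>s: "\<omega> \<in> space M" and nB: "\<omega> \<notin> B" and \<omega>N: "\<omega> \<in> space M - N" using \<omega>A unfolding A_def by auto
      note hyp = N[OF \<omega>N]
      define b where "b = bh \<omega>"
      have bR: "\<forall>j. \<bar>b $ j\<bar> \<le> R" and S3: "S3ONC L U_L lam a n (\<lambda>i. Z i \<omega>) b"
        and pen: "pen_loss L lam a n b (\<lambda>i. Z i \<omega>) \<le> pen_loss L lam a n beps (\<lambda>i. Z i \<omega>) + \<Gamma>"
        using hyp unfolding b_def by auto
      define k where "k = card {j. b $ j \<noteq> 0}"
      have big: "\<bar>b $ j\<bar> \<ge> a * lam" if "b $ j \<noteq> 0" for j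
      proof (rule ccontr)
        assume "\<not> \<bar>b $ j\<bar> \<ge> a * lam"
        then have "\<bar>b $ j\<bar> \<in> {0<..<a * lam}" using that by auto
        then have "U_L + deriv (deriv (penalty lam a)) \<bar>b $ j\<bar> \<ge> 0" using S3 unfolding S3ONC_def by blast
        moreover have "deriv (deriv (penalty lam a)) \<bar>b $ j\<bar> = - 1 / a"
          by (rule pen_dd) (use a0 \<open>\<bar>b $ j\<bar> \<in> {0<..<a * lam}\<close> in auto)
        ultimately have "U_L \<ge> 1 / a" by simp
        moreover have "a * U_L < 1" using aU UL1 by (simp add: field_simps)
        then have "U_L < 1 / a" using a0 by (simp add: field_simps)
        ultimately show False by simp
      qed
      have penbh: "(\<Sum>j\<in>UNIV. penalty lam a \<bar>b $ j\<bar>) = real k * ?P"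
        unfolding k_def by (rule pen_sum_eq[OF a0 lam0 big])
      have penbe: "(\<Sum>j\<in>UNIV. penalty lam a \<bar>beps $ j\<bar>) \<le> real s * ?P"
        unfolding sdef by (rule pen_sum_le[OF a0 lam0])
      have peq: "?emp b \<omega> + real k * ?P \<le> ?emp beps \<omega> + real s * ?P + \<Gamma>"
        using pen penbh penbe unfolding pen_loss_def by linarith
      have P0: "?P \<ge> 0" using pen_bounds(1)[OF a0 lam0, of "a*lam"] a0 lam0 by simp
      define avg where "avg = (\<Sum>i<n. C (Z i \<omega>)) / real n"
      have avg0: "avg \<ge> 0" unfolding avg_def using C_nonneg by (simp add: sum_nonneg)
      have avgb: "avg \<le> C\<mu> + 2 * \<sigma>L"
      proof -
        have "\<omega> \<notin> BadC" using nB unfolding B_def by auto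
        then have d: "\<bar>\<Sum>i<n. 1 / real n * (C (Z i \<omega>) - integral\<^sup>L M (\<lambda>\<omega>'. C (Z i \<omega>')))\<bar> \<le> 2 * \<sigma>L"
          using \<omega>s unfolding BadC_def by auto
        have e: "(\<Sum>i<n. 1 / real n * (C (Z i \<omega>) - integral\<^sup>L M (\<lambda>\<omega>'. C (Z i \<omega>'))))
             = avg - (\<Sum>i<n. integral\<^sup>L M (\<lambda>\<omega>'. C (Z i \<omega>'))) / real n"
          unfolding avg_def by (simp add: sum_distrib_left[symmetric] sum_subtractf diff_divide_distrib sum_divide_distrib[symmetric])
        have "(\<Sum>i<n. integral\<^sup>L M (\<lambda>\<omega>'. C (Z i \<omega>'))) \<le> (\<Sum>i<n. C\<mu>)"
        proof (rule sum_mono)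
          fix i
          have "integral\<^sup>L M (\<lambda>\<omega>'. C (Z i \<omega>')) = integral\<^sup>L M (\<lambda>\<omega>'. \<bar>C (Z i \<omega>')\<bar>)"
            using C_nonneg by simp
          then show "integral\<^sup>L M (\<lambda>\<omega>'. C (Z i \<omega>')) \<le> C\<mu>" using C_mean[of i] by simp
        qed
        then have "(\<Sum>i<n. integral\<^sup>L M (\<lambda>\<omega>'. C (Z i \<omega>'))) / real n \<le> C\<mu>"
          using n1 by (simp add: divide_le_eq mult.commute)
        then show ?thesis using d e by (simp add: abs_le_iff)
      qed
      have kp: "k \<le> p" unfolding k_def p_def by (rule card_mono) auto
      define pt where "pt = max k pu"
      have ptI: "pt \<in> I" unfolding pt_def I_def using kp by auto
      have kq: "card {j. b $ j \<noteq> 0} \<le> qq pt" unfolding qq_def pt_def k_def[symmetric] using kp by simp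
      have qp: "qq pt \<le> CARD('p)" using qq1[OF ptI] p_def by simp
      obtain g where gN: "g \<in> NN pt" and gn: "norm (b - g) \<le> sqrt (real (qq pt)) * hh pt / 2"
        using net_cover[OF hh0[OF ptI] RK bR kq qp] unfolding NN_def by blast
      have sqh: "sqrt (real (qq pt)) * hh pt / 2 = \<epsilon> / Y"
        unfolding hh_def using qq1[OF ptI] Y2 by (simp add: field_simps)
      have gn': "norm (b - g) \<le> \<epsilon> / Y" using gn sqh by simp
      have Dg: "\<bar>?emp g \<omega> - ?pop g\<bar> \<le> dev pt"
      proof -
        have "\<omega> \<notin> Bad g (tt pt)" using nB gN ptI unfolding B_def by auto
        then show ?thesis using \<omega>s unfolding Bad_def dev_def by auto
      qed
      have Dbe0: "\<bar>?emp beps \<omega> - ?pop beps\<bar> \<le> dev pu"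
      proof -
        have "\<omega> \<notin> Bad beps (tt pu)" using nB unfolding B_def by auto
        then show ?thesis using \<omega>s unfolding Bad_def dev_def by auto
      qed
      have devmono: "dev pu \<le> dev pt"
      proof -
        have "tt pu \<le> tt pt" unfolding tt_def pt_def using z0 c0
          by (intro divide_right_mono mult_right_mono) auto
        then have "tt pu / real n \<le> tt pt / real n" by (simp add: divide_right_mono)
        then show ?thesis unfolding dev_def using \<sigma>_ge1
          by (intro mult_left_mono add_mono real_sqrt_le_mono) auto
      qed
      have Dbe: "\<bar>?emp beps \<omega> - ?pop beps\<bar> \<le> dev pt" using Dbe0 devmono by simp
      have lip1: "\<bar>?emp b \<omega> - ?emp g \<omega>\<bar> \<le> (C\<mu> + 2 * \<sigma>L) * (\<epsilon> / Y)"
      proof -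
        have "\<bar>?emp b \<omega> - ?emp g \<omega>\<bar> \<le> avg * norm (b - g)"
          unfolding avg_def by (rule emp_lip[where W=W]) (use support \<omega>s C_lip n1 in auto)
        also have "\<dots> \<le> (C\<mu> + 2 * \<sigma>L) * (\<epsilon> / Y)"
          using avg0 avgb gn' by (intro mult_mono) auto
        finally show ?thesis .
      qed
      have lip2: "\<bar>?pop b - ?pop g\<bar> \<le> C\<mu> * (\<epsilon> / Y)"
      proof -
        have "\<bar>?pop b - ?pop g\<bar> \<le> C\<mu> * norm (b - g)"
          by (rule pop_lip[where W=W and C=C]) (use L_int C_int support C_lip C_nonneg C_mean n1 in auto)
        also have "\<dots> \<le> C\<mu> * (\<epsilon> / Y)" using gn' C\<mu>_ge1 by (intro mult_left_mono) auto
        finally show ?thesis .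
      qed
      have sum2: "(C\<mu> + 2 * \<sigma>L) * (\<epsilon> / Y) + C\<mu> * (\<epsilon> / Y) \<le> 2 * \<epsilon>"
      proof -
        have "(C\<mu> + 2 * \<sigma>L) * (\<epsilon> / Y) + C\<mu> * (\<epsilon> / Y) = 2 * Y * (\<epsilon> / Y)"
          unfolding Y_def by (simp add: algebra_simps)
        also have "\<dots> = 2 * \<epsilon>" using Y2 by simp
        finally show ?thesis by simp
      qed
      have key: "?pop b - ?pop beps \<le> (real s - real k) * ?P + \<Gamma> + 2 * dev pt + 2 * \<epsilon>"
        using peq Dg Dbe lip1 lip2 sum2 unfolding abs_le_iff left_diff_distrib by linarith
      have T: "2 * dev pt = 2 * \<sigma> / sqrt (real n) * sqrt (2 * real pt / c * \<zeta>)
                 + 4 * \<sigma> / (real n * c) * \<zeta> * real pt"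
      proof -
        have "sqrt (tt pt / real n) = sqrt (2 * real pt / c * \<zeta>) / sqrt (real n)"
          unfolding tt_def by (simp add: real_sqrt_divide real_sqrt_mult field_simps)
        moreover have "tt pt / real n = 2 * \<zeta> * real pt / (real n * c)"
          unfolding tt_def by (simp add: field_simps)
        ultimately show ?thesis unfolding dev_def by (simp add: field_simps)
      qed
      show ?thesis
      proof (cases "k \<ge> pu")
        case True
        then have ptk: "pt = k" unfolding pt_def by simp
        have "4 * \<sigma> / (real n * c) * \<zeta> * real pt + 2 * \<sigma> / sqrt (real n) * sqrt (2 * real pt / c * \<zeta>)
          + \<Gamma> + 2 * \<epsilon> + epshat < (real pt - real s) * ?P"
          using iii[of pt] True kp ptk by simp
        then have "?pop b - ?pop beps < - epshat" using key T ptk by (simp add: algebra_simps)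
        then have "?pop b < ?pop bstar" using gap by simp
        then show ?thesis using bmin by (meson not_le)
      next
        case False
        then have ptk: "pt = pu" unfolding pt_def by simp
        have "real k * ?P \<ge> 0" using P0 by simp
        moreover have "4 * \<sigma> / real n * (real pu / c) * \<zeta> = 4 * \<sigma> / (real n * c) * \<zeta> * real pu"
          by (simp add: field_simps)
        ultimately show ?thesis using key T ptk gap unfolding b_def
          by (simp add: algebra_simps)
      qed
    qed
    show "\<exists>A\<in>sets M. 1 - 2 * (real CARD('p) + 1) * exp (- c * real n) - 6 * exp (- real pu * zeta1 \<sigma>L C\<mu> CARD('p) R \<epsilon>) \<le> measure M A \<and>
          (\<forall>\<omega>\<in>A. ?pop (bh \<omega>) - ?pop bstar \<le> real s * ?P
                  + 2 * \<sigma> / sqrt (real n) * sqrt (2 * real pu / c * zeta1 \<sigma>L C\<mu> CARD('p) R \<epsilon>)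
                  + 4 * \<sigma> / real n * (real pu / c) * zeta1 \<sigma>L C\<mu> CARD('p) R \<epsilon>
                  + 2 * \<epsilon> + epshat + \<Gamma>)"
      using A_sets A_meas main unfolding \<zeta>_def by blast
  qed
qed


end
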